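(* Let $P=P_1\cup P_2$ be a finite set of points in the plane with $P$ generic, such that $P_1$ is contained in a disk of radius $1$ centered at a point $o$, and every point $a\in P_2$ satisfies $|oa|>3$ and lies in a fixed wedge with apex $o$ and angle $3.6^\circ$. Then $T_P$ contains exactly one edge connecting a point of $P_1$ to a point of $P_2$ (i.e., only one such edge).
   Context: A finite planar point set is generic if no three of its points are collinear and every subset has a unique Euclidean minimum spanning tree (MST); $T_P$ denotes the MST of $P$. $|uv|$ is the Euclidean distance. *)

theory Defs
  imports "HOL-Analysis.Analysis"
begin

text \<open>Points of the plane are represented as complex numbers; the Euclidean
distance is \<open>dist a b = cmod (a - b)\<close>. A graph on a vertex set S is a set of
edges, each edge an unordered pair {a,b} with a \<noteq> b, a,b \<in> S.\<close>

definition possible_edges :: "complex set \<Rightarrow> complex set set" where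
  "possible_edges S = {{a, b} | a b. a \<in> S \<and> b \<in> S \<and> a \<noteq> b}"

definition edge_rel :: "complex set set \<Rightarrow> (complex \<times> complex) set" where
  "edge_rel E = {(a, b). {a, b} \<in> E}"

definition connected_graph :: "complex set \<Rightarrow> complex set set \<Rightarrow> bool" where
  "connected_graph S E \<longleftrightarrow> (\<forall>a\<in>S. \<forall>b\<in>S. (a, b) \<in> (edge_rel E)\<^sup>*)"

definition spanning_tree :: "complex set \<Rightarrow> complex set set \<Rightarrow> bool" where
  "spanning_tree S T \<longleftrightarrow> T \<subseteq> possible_edges S \<and> connected_graph S T \<and> card T = card S - 1"

definition edge_length :: "complex set \<Rightarrow> real" where
  "edge_length e = (THE d. \<exists>a b. e = {a, b} \<and> d = dist a b)"

definition weight :: "complex set set \<Rightarrow> real" where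
  "weight T = (\<Sum>e\<in>T. edge_length e)"

definition is_mst :: "complex set \<Rightarrow> complex set set \<Rightarrow> bool" where
  "is_mst S T \<longleftrightarrow> spanning_tree S T \<and> (\<forall>T'. spanning_tree S T' \<longrightarrow> weight T \<le> weight T')"

definition MST :: "complex set \<Rightarrow> complex set set" where
  "MST S = (THE T. is_mst S T)"

definition generic :: "complex set \<Rightarrow> bool" where
  "generic P \<longleftrightarrow> finite P
     \<and> (\<forall>a\<in>P. \<forall>b\<in>P. \<forall>c\<in>P. a \<noteq> b \<and> a \<noteq> c \<and> b \<noteq> c \<longrightarrow> \<not> collinear {a, b, c})
     \<and> (\<forall>Q\<subseteq>P. \<exists>!T. is_mst Q T)"

end

theory Submission
  imports Defs
begin

lemma cis_diff_le: "cmod (cis a - cis b) \<le> \<bar>a - b\<bar>"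
proof -
  have "(cmod (cis a - cis b))^2 = (cos a - cos b)^2 + (sin a - sin b)^2"
    by (simp add: cmod_power2)
  also have "\<dots> = 2 - 2 * cos (a - b)"
    by (simp add: cos_diff power2_eq_square algebra_simps)
  also have "cos (a - b) = 1 - 2 * sin ((a-b)/2) ^ 2"
  proof -
    obtain t where t: "a - b = 2 * t" "t = (a-b)/2" by (intro that[of "(a-b)/2"]) auto
    show ?thesis unfolding t(1) by (simp add: t(2)[symmetric] cos_double_sin)
  qed
  also have "2 - 2 * (1 - 2 * sin ((a-b)/2) ^ 2) = (2 * \<bar>sin ((a-b)/2)\<bar>)^2"
    by (simp add: power2_eq_square)
  finally have sq: "(cmod (cis a - cis b))^2 = (2 * \<bar>sin ((a-b)/2)\<bar>)^2" .
  have e: "cmod (cis a - cis b) = 2 * \<bar>sin ((a-b)/2)\<bar>"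
    using sq by (subst (asm) power2_eq_iff_nonneg) auto
  show ?thesis unfolding e using abs_sin_x_le_abs_x[of "(a-b)/2"] by simp
qed

lemma geo:
  fixes oc a1 a2 p2 :: complex
  assumes r: "dist oc a1 \<le> dist oc a2" and f1: "dist oc a1 > 3" and dp: "dist oc p2 \<le> 1"
    and w1: "a1 - oc = complex_of_real (dist oc a1) * cis f1" and w2: "a2 - oc = complex_of_real (dist oc a2) * cis f2"
    and ang: "\<bar>f1 - f2\<bar> \<le> pi / 50"
  shows "dist a1 a2 < dist p2 a2"
proof -
  define r1 where "r1 = dist oc a1"
  define r2 where "r2 = dist oc a2"
  have w1': "a1 = oc + complex_of_real r1 * cis f1" using w1 unfolding r1_def by (simp add: algebra_simps)
  have w2': "a2 = oc + complex_of_real r2 * cis f2" using w2 unfolding r2_def by (simp add: algebra_simps)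
  have "a1 - a2 = complex_of_real r1 * (cis f1 - cis f2) - complex_of_real (r2 - r1) * cis f2"
    by (subst w1', subst w2') (simp add: algebra_simps)
  then have "cmod (a1 - a2) \<le> cmod (complex_of_real r1 * (cis f1 - cis f2)) + cmod (complex_of_real (r2 - r1) * cis f2)"
    by (metis norm_triangle_ineq4)
  also have "\<dots> = r1 * cmod (cis f1 - cis f2) + (r2 - r1)"
    using r f1 unfolding r1_def r2_def by (simp add: norm_mult flip: of_real_diff)
  also have "\<dots> \<le> r1 * (pi/50) + (r2 - r1)"
    using cis_diff_le[of f1 f2] ang f1 unfolding r1_def
    by (intro add_right_mono mult_left_mono) auto
  also have "\<dots> < r2 - 1"
  proof -
    have "pi * r1 < 4 * r1" using pi_less_4 f1 unfolding r1_def by (intro mult_strict_right_mono) auto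
    then show ?thesis using f1 unfolding r1_def by (simp add: field_simps)
  qed
  also have "r2 - 1 \<le> dist p2 a2"
    using dist_triangle[of oc a2 p2] dp unfolding r2_def by simp
  finally show ?thesis by (simp add: dist_norm)
qed
lemma edge_length_eq[simp]: "edge_length {a, b} = dist a b"
  unfolding edge_length_def
  by (rule the_equality) (auto simp: doubleton_eq_iff dist_commute)

lemma edge_rel_iff[simp]: "(a, b) \<in> edge_rel E \<longleftrightarrow> {a, b} \<in> E"
  by (simp add: edge_rel_def)

lemma edge_rel_sym: "sym (edge_rel E)"
  by (auto simp: sym_def insert_commute)

lemma rt_sym: "(a, b) \<in> (edge_rel E)\<^sup>* \<Longrightarrow> (b, a) \<in> (edge_rel E)\<^sup>*"
  using sym_rtrancl[OF edge_rel_sym] by (auto simp: sym_def)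

lemma rt_mono: "E \<subseteq> F \<Longrightarrow> (a, b) \<in> (edge_rel E)\<^sup>* \<Longrightarrow> (a, b) \<in> (edge_rel F)\<^sup>*"
proof -
  assume "E \<subseteq> F" "(a, b) \<in> (edge_rel E)\<^sup>*"
  moreover have "edge_rel E \<subseteq> edge_rel F" using \<open>E \<subseteq> F\<close> unfolding edge_rel_def by auto
  ultimately show ?thesis using rtrancl_mono by blast
qed

lemma rt_edge: "{a, b} \<in> E \<Longrightarrow> (a, b) \<in> (edge_rel E)\<^sup>*"
  by auto

lemma path_insert:
  assumes "(a, b) \<in> (edge_rel (insert {x, y} E))\<^sup>*"
  shows "(a, b) \<in> (edge_rel E)\<^sup>* \<or> (a, x) \<in> (edge_rel E)\<^sup>* \<or> (a, y) \<in> (edge_rel E)\<^sup>*"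
  using assms
proof (induction rule: rtrancl_induct)
  case base
  then show ?case by simp
next
  case (step b c)
  show ?case
  proof (cases "{b, c} \<in> E")
    case True
    then show ?thesis using step by (meson rtrancl.rtrancl_into_rtrancl edge_rel_iff)
  next
    case False
    then have "{b, c} = {x, y}" using step(2) by auto
    then have "b = x \<or> b = y" by (auto simp: doubleton_eq_iff)
    then show ?thesis using step(3) by auto
  qed
qed

lemma split_path:
  assumes "(u, z) \<in> (edge_rel T)\<^sup>*" "{u, v} \<in> T"
  shows "(u, z) \<in> (edge_rel (T - {{u, v}}))\<^sup>* \<or> (v, z) \<in> (edge_rel (T - {{u, v}}))\<^sup>*"
proof -
  have T: "T = insert {u, v} (T - {{u, v}})" using assms(2) by auto
  have "(z, u) \<in> (edge_rel (insert {u, v} (T - {{u, v}})))\<^sup>*"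
    using rt_sym[OF assms(1)] T by simp
  from path_insert[OF this] show ?thesis using rt_sym by blast
qed

definition comps :: "complex set set \<Rightarrow> complex set \<Rightarrow> complex set set" where
  "comps E S = (\<lambda>a. {b \<in> S. (a, b) \<in> (edge_rel E)\<^sup>*}) ` S"

lemma finite_possible_edges: "finite S \<Longrightarrow> finite (possible_edges S)"
proof -
  assume "finite S"
  moreover have "possible_edges S \<subseteq> Pow S" unfolding possible_edges_def by auto
  ultimately show ?thesis by (meson finite_Pow_iff finite_subset)
qed

lemma comps_count:
  assumes "finite E" "finite S"
  shows "E \<subseteq> possible_edges S \<Longrightarrow> card S \<le> card E + card (comps E S)"
  using assms(1)
proof (induction E rule: finite_induct)
  case empty
  have "comps {} S = (\<lambda>a. {a}) ` S"
    unfolding comps_def edge_rel_def by (auto intro!: image_cong)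
  moreover have "card ((\<lambda>a. {a}) ` S) = card S" by (rule card_image) (auto simp: inj_on_def)
  ultimately show ?case by simp
next
  case (insert f E)
  from insert(4) obtain x y where f: "f = {x, y}" "x \<in> S" "y \<in> S"
    unfolding possible_edges_def by auto
  have IH: "card S \<le> card E + card (comps E S)" using insert by auto
  define R where "R = (\<lambda>F a. {b \<in> S. (a, b) \<in> (edge_rel F)\<^sup>*})"
  have cE: "comps E S = R E ` S" and cE': "comps (insert f E) S = R (insert f E) ` S"
    unfolding comps_def R_def by auto
  have fin: "finite (comps E S)" "finite (comps (insert f E) S)" using cE cE' assms(2) by auto
  have sub: "comps E S - {R E x, R E y} \<subseteq> comps (insert f E) S - {R (insert f E) x}"
  proof
    fix c assume c: "c \<in> comps E S - {R E x, R E y}"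
    then obtain a where a: "a \<in> S" "c = R E a" using cE by auto
    have nx: "(a, x) \<notin> (edge_rel E)\<^sup>*"
    proof
      assume ax: "(a, x) \<in> (edge_rel E)\<^sup>*"
      have "R E a = R E x" unfolding R_def using ax rt_sym
        by (auto intro: rtrancl_trans)
      then show False using c a by auto
    qed
    have ny: "(a, y) \<notin> (edge_rel E)\<^sup>*"
    proof
      assume ax: "(a, y) \<in> (edge_rel E)\<^sup>*"
      have "R E a = R E y" unfolding R_def using ax rt_sym
        by (auto intro: rtrancl_trans)
      then show False using c a by auto
    qed
    have eq: "R (insert f E) a = R E a"
      unfolding R_def f using path_insert nx ny rt_mono[of E "insert {x,y} E"] by blast
    have "a \<notin> R (insert f E) x"
    proof
      assume "a \<in> R (insert f E) x"
      then have "(x, a) \<in> (edge_rel (insert {x, y} E))\<^sup>*" unfolding R_def f by auto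
      then have "(a, x) \<in> (edge_rel (insert {x, y} E))\<^sup>*" by (rule rt_sym)
      then show False using path_insert nx ny by blast
    qed
    moreover have "a \<in> R (insert f E) a" unfolding R_def using a by auto
    ultimately show "c \<in> comps (insert f E) S - {R (insert f E) x}"
      using eq a cE' by auto
  qed
  have "card (comps E S) \<le> card ((comps E S - {R E x, R E y}) \<union> {R E x, R E y})"
    by (rule card_mono) (use fin in auto)
  also have "\<dots> \<le> card (comps E S - {R E x, R E y}) + card {R E x, R E y}"
    by (rule card_Un_le)
  also have "card {R E x, R E y} \<le> 2"
    by (cases "R E x = R E y") auto
  also have "card (comps E S - {R E x, R E y}) \<le> card (comps (insert f E) S - {R (insert f E) x})"
    by (rule card_mono[OF _ sub]) (use fin in auto)
  also have "\<dots> = card (comps (insert f E) S) - 1"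
    using fin(2) cE' f by (simp add: card_Diff_singleton)
  finally have "card (comps E S) \<le> card (comps (insert f E) S) - 1 + 2" by simp
  moreover have "card (comps (insert f E) S) \<ge> 1"
    using fin(2) cE' f(2) by (metis One_nat_def Suc_leI card_gt_0_iff empty_iff image_eqI)
  ultimately have "card (comps E S) \<le> card (comps (insert f E) S) + 1" by linarith
  then show ?case using IH insert by simp
qed

lemma connected_count:
  assumes "finite S" "S \<noteq> {}" "E \<subseteq> possible_edges S" "connected_graph S E"
  shows "card S \<le> card E + 1"
proof -
  have "finite E" using assms finite_possible_edges finite_subset by blast
  have "comps E S = {S}"
    using assms(2,4) unfolding comps_def connected_graph_def by auto
  then show ?thesis using comps_count[OF \<open>finite E\<close> assms(1) assms(3)] by simp
qed

lemma edge_in_S: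
  assumes "{u, v} \<in> possible_edges S"
  shows "u \<in> S" "v \<in> S" "u \<noteq> v"
  using assms unfolding possible_edges_def by (auto simp: doubleton_eq_iff)

lemma tree_finite: "finite S \<Longrightarrow> spanning_tree S T \<Longrightarrow> finite T"
  unfolding spanning_tree_def using finite_possible_edges finite_subset by blast

lemma no_cycle:
  assumes fin: "finite S" and st: "spanning_tree S T" and e: "{u, v} \<in> T"
  shows "(u, v) \<notin> (edge_rel (T - {{u, v}}))\<^sup>*"
proof
  assume uv: "(u, v) \<in> (edge_rel (T - {{u, v}}))\<^sup>*"
  let ?E = "T - {{u, v}}"
  have sub: "T \<subseteq> possible_edges S" and con: "connected_graph S T" and c: "card T = card S - 1"
    using st unfolding spanning_tree_def by auto
  have uS: "u \<in> S" "v \<in> S" using e sub edge_in_S by auto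
  have reach: "(u, z) \<in> (edge_rel ?E)\<^sup>*" if "z \<in> S" for z
  proof -
    have "(u, z) \<in> (edge_rel T)\<^sup>*" using con uS that unfolding connected_graph_def by auto
    from split_path[OF this e] show ?thesis using uv by (meson rtrancl_trans)
  qed
  have "connected_graph S ?E" unfolding connected_graph_def
    using reach rt_sym by (meson rtrancl_trans)
  then have "card S \<le> card ?E + 1"
    using connected_count[OF fin _ _] uS sub by blast
  moreover have "card ?E = card T - 1" using e tree_finite[OF fin st] by simp
  moreover have "card T \<ge> 1" using e tree_finite[OF fin st] by (metis One_nat_def Suc_leI card_gt_0_iff empty_iff)
  moreover have "card S \<ge> 1" using uS fin by (metis One_nat_def Suc_leI card_gt_0_iff empty_iff)
  ultimately show False using c by arith
qed

lemma exchange: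
  assumes fin: "finite S" and mst: "is_mst S T" and e: "{u, v} \<in> T"
    and xS: "x \<in> S" and yS: "y \<in> S"
    and ux: "(u, x) \<in> (edge_rel (T - {{u, v}}))\<^sup>*"
    and uy: "(u, y) \<notin> (edge_rel (T - {{u, v}}))\<^sup>*"
  shows "dist u v \<le> dist x y"
proof -
  let ?E = "T - {{u, v}}"
  let ?T = "insert {x, y} ?E"
  have st: "spanning_tree S T" using mst unfolding is_mst_def by auto
  have sub: "T \<subseteq> possible_edges S" and con: "connected_graph S T" and c: "card T = card S - 1"
    using st unfolding spanning_tree_def by auto
  have finT: "finite T" using tree_finite[OF fin st] .
  have uS: "u \<in> S" "v \<in> S" using e sub edge_in_S by auto
  have xy: "x \<noteq> y" using ux uy by auto
  have notin: "{x, y} \<notin> ?E"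
  proof
    assume "{x, y} \<in> ?E"
    then have "(x, y) \<in> (edge_rel ?E)\<^sup>*" by (rule rt_edge)
    then show False using ux uy by (meson rtrancl_trans)
  qed
  have "{x, y} \<in> possible_edges S"
    using xS yS xy unfolding possible_edges_def by blast
  then have sub': "?T \<subseteq> possible_edges S"
    using sub by blast
  have "card ?T = Suc (card ?E)" using notin finT by simp
  also have "card ?E = card T - 1" using e finT by simp
  also have "card T \<ge> 1" using e finT by (metis One_nat_def Suc_leI card_gt_0_iff empty_iff)
  then have "Suc (card T - 1) = card T" by simp
  finally have card': "card ?T = card S - 1" using c by simp
  have ET: "?E \<subseteq> ?T" by auto
  have reachT: "(u, z) \<in> (edge_rel ?T)\<^sup>*" if "z \<in> S" for z
  proof -
    have "(u, z) \<in> (edge_rel T)\<^sup>*" using con uS that unfolding connected_graph_def by auto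
    from split_path[OF this e] show ?thesis
    proof
      assume "(u, z) \<in> (edge_rel ?E)\<^sup>*"
      then show ?thesis using rt_mono[OF ET] by blast
    next
      assume vz: "(v, z) \<in> (edge_rel ?E)\<^sup>*"
      have "(u, y) \<in> (edge_rel T)\<^sup>*" using con uS yS unfolding connected_graph_def by auto
      from split_path[OF this e] uy have "(v, y) \<in> (edge_rel ?E)\<^sup>*" by blast
      then have yv: "(y, v) \<in> (edge_rel ?T)\<^sup>*" using rt_sym rt_mono[OF ET] by blast
      have "(u, x) \<in> (edge_rel ?T)\<^sup>*" using ux rt_mono[OF ET] by blast
      moreover have "(x, y) \<in> (edge_rel ?T)\<^sup>*" by (rule rt_edge) simp
      moreover have "(v, z) \<in> (edge_rel ?T)\<^sup>*" using vz rt_mono[OF ET] by blast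
      ultimately show ?thesis using yv by (meson rtrancl_trans)
    qed
  qed
  have "connected_graph S ?T" unfolding connected_graph_def
    using reachT rt_sym by (meson rtrancl_trans)
  then have "spanning_tree S ?T" using sub' card' unfolding spanning_tree_def by auto
  then have "weight T \<le> weight ?T" using mst unfolding is_mst_def by auto
  moreover have "weight ?T = weight ?E + dist x y"
    unfolding weight_def using notin finT by simp
  moreover have "weight T = weight ?E + dist u v"
    unfolding weight_def using e finT by (simp add: sum.remove)
  ultimately show ?thesis by simp
qed

lemma crossing_contra:
  assumes fin: "finite S" and mst: "is_mst S T" and e1: "{p1, a1} \<in> T" and e2: "{p2, a2} \<in> T"
    and ne: "{p1, a1} \<noteq> {p2, a2}"
    and g1: "dist a1 a2 < dist p2 a2" and g2: "dist p1 p2 < dist p2 a2"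
  shows False
proof -
  let ?E = "T - {{p2, a2}}"
  have st: "spanning_tree S T" using mst unfolding is_mst_def by auto
  have sub: "T \<subseteq> possible_edges S" and con: "connected_graph S T"
    using st unfolding spanning_tree_def by auto
  have S1: "p1 \<in> S" "a1 \<in> S" using e1 sub edge_in_S by auto
  have S2: "p2 \<in> S" "a2 \<in> S" using e2 sub edge_in_S by auto
  have nc: "(p2, a2) \<notin> (edge_rel ?E)\<^sup>*" by (rule no_cycle[OF fin st e2])
  show False
  proof (cases "(p2, a1) \<in> (edge_rel ?E)\<^sup>*")
    case True
    have "dist p2 a2 \<le> dist a1 a2" by (rule exchange[OF fin mst e2 S1(2) S2(2) True nc])
    then show False using g1 by simp
  next
    case False
    have "(p2, a1) \<in> (edge_rel T)\<^sup>*" using con S1 S2 unfolding connected_graph_def by auto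
    from split_path[OF this e2] False have a2a1: "(a2, a1) \<in> (edge_rel ?E)\<^sup>*" by blast
    have "{a1, p1} \<in> ?E" using e1 ne by (auto simp: insert_commute)
    then have "(a1, p1) \<in> (edge_rel ?E)\<^sup>*" by (rule rt_edge)
    with a2a1 have a2p1: "(a2, p1) \<in> (edge_rel ?E)\<^sup>*" by (rule rtrancl_trans)
    have E: "?E = T - {{a2, p2}}" by (simp add: insert_commute)
    have e2': "{a2, p2} \<in> T" using e2 by (simp add: insert_commute)
    have nc': "(a2, p2) \<notin> (edge_rel (T - {{a2, p2}}))\<^sup>*" by (rule no_cycle[OF fin st e2'])
    have "dist a2 p2 \<le> dist p1 p2"
      by (rule exchange[OF fin mst e2' S1(1) S2(1)]) (use a2p1 E nc' in auto)
    then show False using g2 by (simp add: dist_commute)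
  qed
qed

lemma geo1:
  fixes oc p1 p2 a2 :: complex
  assumes "dist oc p1 \<le> 1" "dist oc p2 \<le> 1" "dist oc a2 > 3"
  shows "dist p1 p2 < dist p2 a2"
  using assms dist_triangle[of p1 p2 oc] dist_triangle[of oc a2 p2] by (simp add: dist_commute)

lemma crossing_form:
  assumes "e \<in> possible_edges S" "e \<inter> P1 \<noteq> {}" "e \<inter> P2 \<noteq> {}" "P1 \<inter> P2 = {}"
  shows "\<exists>p a. p \<in> P1 \<and> a \<in> P2 \<and> e = {p, a}"
proof -
  obtain x y where e: "e = {x, y}" using assms(1) unfolding possible_edges_def by auto
  obtain p where p: "p \<in> e" "p \<in> P1" using assms(2) by auto
  obtain a where a: "a \<in> e" "a \<in> P2" using assms(3) by auto
  have "p \<noteq> a" using p a assms(4) by auto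
  then have "e = {p, a}" using p(1) a(1) e by auto
  then show ?thesis using p a by blast
qed

theorem lemma3:
  fixes P1 P2 :: "complex set" and oc :: complex and \<alpha> :: real
  assumes gen: "generic (P1 \<union> P2)"
    and ne1: "P1 \<noteq> {}" and ne2: "P2 \<noteq> {}"
    and disk: "\<forall>p\<in>P1. dist oc p \<le> 1"
    and far: "\<forall>a\<in>P2. dist oc a > 3"
    and wedge: "\<forall>a\<in>P2. \<exists>\<phi>. \<alpha> \<le> \<phi> \<and> \<phi> \<le> \<alpha> + pi / 50
                       \<and> a - oc = complex_of_real (dist oc a) * cis \<phi>"
  shows "card {e \<in> MST (P1 \<union> P2). e \<inter> P1 \<noteq> {} \<and> e \<inter> P2 \<noteq> {}} = 1"
proof -
  define P where "P = P1 \<union> P2"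
  define T where "T = MST P"
  define X where "X = {e \<in> T. e \<inter> P1 \<noteq> {} \<and> e \<inter> P2 \<noteq> {}}"
  have fin: "finite P" using gen unfolding generic_def P_def by auto
  have "\<exists>!T. is_mst P T" using gen unfolding generic_def P_def by auto
  then have mst: "is_mst P T" unfolding T_def MST_def by (rule theI')
  have st: "spanning_tree P T" using mst unfolding is_mst_def by auto
  have sub: "T \<subseteq> possible_edges P" and con: "connected_graph P T"
    using st unfolding spanning_tree_def by auto
  have disj: "P1 \<inter> P2 = {}" using disk far by force
  have finX: "finite X" using tree_finite[OF fin st] unfolding X_def by auto
  have form: "\<exists>p a. p \<in> P1 \<and> a \<in> P2 \<and> e = {p, a}" if "e \<in> X" for e
    using crossing_form[of e P P1 P2] that sub disj unfolding X_def by auto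
  have neX: "X \<noteq> {}"
  proof -
    obtain p a where pa: "p \<in> P1" "a \<in> P2" using ne1 ne2 by auto
    have "(p, a) \<in> (edge_rel T)\<^sup>*" using con pa unfolding connected_graph_def P_def by auto
    then have "a \<in> P1 \<or> X \<noteq> {}"
    proof (induction rule: rtrancl_induct)
      case base
      then show ?case using pa by simp
    next
      case (step z z')
      have "{z, z'} \<in> T" using step(2) by simp
      then have zP: "z' \<in> P" using sub edge_in_S by blast
      show ?case
      proof (cases "z' \<in> P1")
        case True then show ?thesis by simp
      next
        case False
        then have "z' \<in> P2" using zP unfolding P_def by auto
        then show ?thesis using step(3) \<open>{z, z'} \<in> T\<close> unfolding X_def by blast
      qed
    qed
    then show ?thesis using pa disj by auto
  qed
  have uniq: "e1 = e2" if e1X: "e1 \<in> X" and e2X: "e2 \<in> X" for e1 e2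
  proof (rule ccontr)
    assume ne: "e1 \<noteq> e2"
    obtain p1 a1 where 1: "p1 \<in> P1" "a1 \<in> P2" "e1 = {p1, a1}" using form e1X by blast
    obtain p2 a2 where 2: "p2 \<in> P1" "a2 \<in> P2" "e2 = {p2, a2}" using form e2X by blast
    have T1: "{p1, a1} \<in> T" and T2: "{p2, a2} \<in> T" using e1X e2X 1 2 unfolding X_def by auto
    obtain f1 where f1: "\<alpha> \<le> f1" "f1 \<le> \<alpha> + pi / 50" "a1 - oc = complex_of_real (dist oc a1) * cis f1"
      using wedge 1 by blast
    obtain f2 where f2: "\<alpha> \<le> f2" "f2 \<le> \<alpha> + pi / 50" "a2 - oc = complex_of_real (dist oc a2) * cis f2"
      using wedge 2 by blast
    have ang1: "\<bar>f1 - f2\<bar> \<le> pi / 50" using f1(1,2) f2(1,2) unfolding abs_le_iff by linarith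
    have ang2: "\<bar>f2 - f1\<bar> \<le> pi / 50" using f1(1,2) f2(1,2) unfolding abs_le_iff by linarith
    note ang = ang1 ang2
    show False
    proof (cases "dist oc a1 \<le> dist oc a2")
      case True
      have "dist a1 a2 < dist p2 a2"
        by (rule geo[OF True _ _ f1(3) f2(3) ang(1)]) (use far disk 1 2 in auto)
      moreover have "dist p1 p2 < dist p2 a2" by (rule geo1) (use far disk 1 2 in auto)
      ultimately show False using crossing_contra[OF fin mst T1 T2] ne 1 2 by auto
    next
      case False
      then have F: "dist oc a2 \<le> dist oc a1" by simp
      have "dist a2 a1 < dist p1 a1"
        by (rule geo[OF F _ _ f2(3) f1(3) ang(2)]) (use far disk 1 2 in auto)
      moreover have "dist p2 p1 < dist p1 a1" by (rule geo1) (use far disk 1 2 in auto)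
      ultimately show False using crossing_contra[OF fin mst T2 T1] ne 1 2 by auto
    qed
  qed
  have "card X = 1"
  proof -
    obtain e where "e \<in> X" using neX by auto
    then have "X = {e}" using uniq by auto
    then show ?thesis by simp
  qed
  then show ?thesis unfolding X_def T_def P_def .
qed

end
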